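(* Let $\mathcal{X}\subseteq\mathbb{R}^d$ be a nonempty closed convex bounded set, $R\ge\max_{x,y\in\mathcal{X}}\|x-y\|$, and let $F\colon\mathcal{X}\to\mathbb{R}^d$ be monotone (with no smoothness assumption), accessed via a stochastic oracle with variance parameter $\sigma^2$; let $G=\max_{x\in\mathcal{X}}\|F(x)\|$. Let $\bar x_T$ be the output of Algorithm AdaPEG (described in the context) with parameters $\gamma_0\ge0$, $\eta>0$. Then \[\mathbb{E}[\mathrm{Err}(\bar x_T)]\le\frac1T\left(\frac12\gamma_0R^2+\left(\sqrt2\frac{R^2}{\eta}+4\sqrt2\eta+R\right)(G+\sigma)\sqrt{T+1}\right)=O\left(\frac{\gamma_0R^2}{T}+\frac{\left(\frac{R^2}{\eta}+\eta+R\right)(G+\sigma)}{\sqrt T}\right).\] In particular, setting $\eta=\Theta(R)$ gives $\mathbb{E}[\mathrm{Err}(\bar x_T)]\le O\left(\frac{\gamma_0R^2}{T}+\frac{R(G+\sigma)}{\sqrt T}\right)$.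
   Context: $\|\cdot\|$ is the Euclidean norm. Monotone: $\langle F(x)-F(y),x-y\rangle\ge0$ for all $x,y$. Stochastic oracle: queried at $x_t$ it returns a random $\widehat{F(x_t)}$ with $\mathbb{E}[\widehat{F(x_t)}\mid x_1,\dots,x_t]=F(x_t)$ and $\mathbb{E}\|\widehat{F(x_t)}-F(x_t)\|^2\le\sigma^2$. $\mathrm{Err}(x)=\sup_{y\in\mathcal{X}}\langle F(y),x-y\rangle$. Algorithm AdaPEG: $x_0=z_0\in\mathcal{X}$. For $t=1,\dots,T$: $x_t=\arg\min_{u\in\mathcal{X}}\{\langle\widehat{F(x_{t-1})},u\rangle+\tfrac12\gamma_{t-1}\|u-z_{t-1}\|^2\}$; $\gamma_t=\frac1\eta\sqrt{\eta^2\gamma_0^2+\sum_{s=1}^t\|\widehat{F(x_s)}-\widehat{F(x_{s-1})}\|^2}$; $z_t=\arg\min_{u\in\mathcal{X}}\{\langle\widehat{F(x_t)},u\rangle+\tfrac12\gamma_{t-1}\|u-z_{t-1}\|^2+\tfrac12(\gamma_t-\gamma_{t-1})\|u-x_t\|^2\}$. Output $\bar x_T=\frac1T\sum_{t=1}^Tx_t$. *)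

theory Defs
  imports "HOL-Analysis.Analysis" "HOL-Probability.Probability"
begin

definition is_filtration :: "'w measure \<Rightarrow> (nat \<Rightarrow> 'w measure) \<Rightarrow> bool" where
  "is_filtration M Fl \<longleftrightarrow>
     (\<forall>t. subalgebra M (Fl t)) \<and> (\<forall>s t. s \<le> t \<longrightarrow> sets (Fl s) \<subseteq> sets (Fl t))"

definition Err :: "('a::real_inner) set \<Rightarrow> ('a \<Rightarrow> 'a) \<Rightarrow> 'a \<Rightarrow> real" where
  "Err X F x = (SUP y\<in>X. inner (F y) (x - y))"

definition adapeg_gamma :: "real \<Rightarrow> real \<Rightarrow> (nat \<Rightarrow> 'a::real_normed_vector) \<Rightarrow> nat \<Rightarrow> real" where
  "adapeg_gamma \<eta> \<gamma>0 gh t =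
     (1 / \<eta>) * sqrt (\<eta>\<^sup>2 * \<gamma>0\<^sup>2 + (\<Sum>s\<in>{1..t}. (norm (gh s - gh (s - 1)))\<^sup>2))"

end

theory Submission
  imports Defs
begin


lemma small_lin_pos:
  fixes L K :: real
  assumes K: "K \<ge> 0" and h: "\<And>s. 0 < s \<Longrightarrow> s \<le> 1 \<Longrightarrow> 0 \<le> s * L + s\<^sup>2 * K"
  shows "0 \<le> L"
proof (rule ccontr)
  assume "\<not> 0 \<le> L"
  hence L: "L < 0" by simp
  define s where "s = min 1 (-L/(2*K+1))"
  have s0: "0 < s" using L K by (simp add: s_def divide_neg_pos add_nonneg_pos)
  have s1: "s \<le> 1" by (simp add: s_def)
  have "s * K \<le> (-L/(2*K+1)) * K" using K by (intro mult_right_mono) (auto simp: s_def)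
  also have "\<dots> < -L"
  proof -
    have "(-L/(2*K+1)) * K = -L * (K/(2*K+1))" by simp
    also have "\<dots> < -L * 1" using L K by (intro mult_strict_left_mono) (auto simp: field_simps)
    finally show ?thesis by simp
  qed
  finally have "L + s * K < 0" by simp
  hence "s * (L + s * K) < 0" using s0 by (simp add: mult_pos_neg)
  moreover have "s * (L + s*K) = s * L + s\<^sup>2 * K" by (simp add: power2_eq_square algebra_simps)
  ultimately show False using h[OF s0 s1] by simp
qed

lemma nsq_add: "(norm (u + v))\<^sup>2 = (norm u)\<^sup>2 + 2 * inner u v + (norm (v::'a::real_inner))\<^sup>2"
  by (simp add: power2_norm_eq_inner inner_add_left inner_add_right inner_commute)

lemma nsq_diff: "(norm (u - v))\<^sup>2 = (norm u)\<^sup>2 - 2 * inner u v + (norm (v::'a::real_inner))\<^sup>2"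
  by (simp add: power2_norm_eq_inner inner_diff_left inner_diff_right inner_commute)

lemma argmin_foc:
  fixes X :: "'a::real_inner set"
  assumes cX: "convex X"
    and am: "is_arg_min (\<lambda>u. inner a u + 1/2 * \<alpha> * (norm (u - p))\<^sup>2 + 1/2 * \<beta> * (norm (u - q))\<^sup>2) (\<lambda>u. u \<in> X) w"
    and \<alpha>: "\<alpha> \<ge> 0" and \<beta>: "\<beta> \<ge> 0" and y: "y \<in> X"
  shows "inner a (y - w) + \<alpha> * inner (w - p) (y - w) + \<beta> * inner (w - q) (y - w) \<ge> 0"
proof -
  define f where "f = (\<lambda>u. inner a u + 1/2 * \<alpha> * (norm (u - p))\<^sup>2 + 1/2 * \<beta> * (norm (u - q))\<^sup>2)"
  have wX: "w \<in> X" and minw: "\<And>v. v \<in> X \<Longrightarrow> f w \<le> f v"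
    using am unfolding is_arg_min_def f_def by (auto simp: not_less)
  define d where "d = y - w"
  define L where "L = inner a d + \<alpha> * inner (w - p) d + \<beta> * inner (w - q) d"
  define K where "K = (\<alpha> + \<beta>)/2 * (norm d)\<^sup>2"
  have "0 \<le> L"
  proof (rule small_lin_pos[of K])
    show "K \<ge> 0" using \<alpha> \<beta> by (simp add: K_def)
    fix s :: real assume s0: "0 < s" and s1: "s \<le> 1"
    have "(1 - s) *\<^sub>R w + s *\<^sub>R y \<in> X" using convexD[OF cX wX y] s0 s1 by simp
    moreover have "(1 - s) *\<^sub>R w + s *\<^sub>R y = w + s *\<^sub>R d" by (simp add: d_def algebra_simps)
    ultimately have "f w \<le> f (w + s *\<^sub>R d)" using minw by simp
    moreover have "f (w + s *\<^sub>R d) = f w + (s * L + s\<^sup>2 * K)"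
    proof -
      have e1: "(norm (w + s *\<^sub>R d - p))\<^sup>2 = (norm (w - p))\<^sup>2 + 2 * s * inner (w - p) d + s\<^sup>2 * (norm d)\<^sup>2"
      proof -
        have "(norm (w + s *\<^sub>R d - p))\<^sup>2 = (norm ((w - p) + s *\<^sub>R d))\<^sup>2" by (simp add: algebra_simps)
        also have "\<dots> = (norm (w - p))\<^sup>2 + 2 * inner (w - p) (s *\<^sub>R d) + (norm (s *\<^sub>R d))\<^sup>2" by (rule nsq_add)
        also have "\<dots> = (norm (w - p))\<^sup>2 + 2 * s * inner (w - p) d + s\<^sup>2 * (norm d)\<^sup>2" by (simp add: power_mult_distrib)
        finally show ?thesis .
      qed
      have e2: "(norm (w + s *\<^sub>R d - q))\<^sup>2 = (norm (w - q))\<^sup>2 + 2 * s * inner (w - q) d + s\<^sup>2 * (norm d)\<^sup>2"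
      proof -
        have "(norm (w + s *\<^sub>R d - q))\<^sup>2 = (norm ((w - q) + s *\<^sub>R d))\<^sup>2" by (simp add: algebra_simps)
        also have "\<dots> = (norm (w - q))\<^sup>2 + 2 * inner (w - q) (s *\<^sub>R d) + (norm (s *\<^sub>R d))\<^sup>2" by (rule nsq_add)
        also have "\<dots> = (norm (w - q))\<^sup>2 + 2 * s * inner (w - q) d + s\<^sup>2 * (norm d)\<^sup>2" by (simp add: power_mult_distrib)
        finally show ?thesis .
      qed
      show ?thesis unfolding f_def e1 e2 L_def K_def by (simp add: inner_add_right algebra_simps)
    qed
    ultimately show "0 \<le> s * L + s\<^sup>2 * K" by simp
  qed
  thus ?thesis by (simp add: L_def d_def)
qed



lemma three_point: "2 * inner (u - v) (w - u) = (norm (w - v))\<^sup>2 - (norm (u - v))\<^sup>2 - (norm (w - (u::'a::real_inner)))\<^sup>2"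
proof -
  have "(norm (w - v))\<^sup>2 = (norm ((w - u) + (u - v)))\<^sup>2" by simp
  also have "\<dots> = (norm (w - u))\<^sup>2 + 2 * inner (w - u) (u - v) + (norm (u - v))\<^sup>2" by (rule nsq_add)
  finally show ?thesis by (simp add: inner_commute)
qed

lemma young_q:
  fixes D d :: "'a::real_inner"
  assumes q: "q \<ge> 0" and hq: "q = 0 \<Longrightarrow> D = 0"
  shows "inner D d - q/2 * (norm d)\<^sup>2 \<le> (norm D)\<^sup>2 / (2*q)"
proof (cases "q = 0")
  case True thus ?thesis using hq by simp
next
  case False
  hence qp: "q > 0" using q by simp
  have "0 \<le> (norm (D - q *\<^sub>R d))\<^sup>2" by simp
  also have "\<dots> = (norm D)\<^sup>2 - 2 * q * inner D d + q\<^sup>2 * (norm d)\<^sup>2"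
    by (simp add: nsq_diff power_mult_distrib)
  finally have "2 * q * (inner D d - q/2 * (norm d)\<^sup>2) \<le> (norm D)\<^sup>2"
    by (simp add: algebra_simps power2_eq_square)
  thus ?thesis using qp by (simp add: field_simps)
qed

lemma scale_half:
  fixes X A B C p :: real
  assumes "2 * X = A - B - C" shows "p * X = p/2*A - p/2*B - p/2*C"
proof -
  have "X = (A - B - C)/2" using assms by simp
  hence "p * X = p * ((A - B - C)/2)" by simp
  also have "\<dots> = p/2*A - p/2*B - p/2*C" by (simp add: field_simps)
  finally show ?thesis .
qed

lemma step_ineq:
  fixes a b c y G1 G2 :: "'a::real_inner"
  assumes fx: "inner G1 (b - a) + p * inner (a - c) (b - a) \<ge> 0"
    and fz: "inner G2 (y - b) + p * inner (b - c) (y - b) + (q - p) * inner (b - a) (y - b) \<ge> 0"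
    and p: "p \<ge> 0" and pq: "p \<le> q" and ya: "norm (y - a) \<le> R"
    and hq: "q = 0 \<Longrightarrow> G2 = G1"
  shows "inner G2 (a - y) \<le> p/2 * (norm (y - c))\<^sup>2 - q/2 * (norm (y - b))\<^sup>2 + (q - p)/2 * R\<^sup>2
           + (norm (G2 - G1))\<^sup>2 / (2*q)"
proof -
  have i1: "p * inner (b - c) (y - b) = p/2 * (norm (y - c))\<^sup>2 - p/2 * (norm (b - c))\<^sup>2 - p/2 * (norm (y - b))\<^sup>2"
    by (rule scale_half, rule three_point)
  have i2: "(q - p) * inner (b - a) (y - b) = (q - p)/2 * (norm (y - a))\<^sup>2 - (q - p)/2 * (norm (a - b))\<^sup>2 - (q - p)/2 * (norm (y - b))\<^sup>2"
    using three_point[of b a y] by (intro scale_half) (simp add: norm_minus_commute)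
  have i3: "p * inner (a - c) (b - a) = p/2 * (norm (b - c))\<^sup>2 - p/2 * (norm (a - c))\<^sup>2 - p/2 * (norm (a - b))\<^sup>2"
    using three_point[of a c b] by (intro scale_half) (simp add: norm_minus_commute)
  have c1: "p/2 * (norm (y - b))\<^sup>2 + (q - p)/2 * (norm (y - b))\<^sup>2 = q/2 * (norm (y - b))\<^sup>2"
    by (simp add: field_simps)
  have c2: "p/2 * (norm (a - b))\<^sup>2 + (q - p)/2 * (norm (a - b))\<^sup>2 = q/2 * (norm (a - b))\<^sup>2"
    by (simp add: field_simps)
  have split: "inner G2 (a - y) = - inner G2 (y - b) - inner G1 (b - a) + inner (G2 - G1) (a - b)"
    by (simp add: inner_diff_left inner_diff_right)
  have yR: "(q - p)/2 * (norm (y - a))\<^sup>2 \<le> (q - p)/2 * R\<^sup>2"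
    using pq ya by (intro mult_left_mono power_mono) auto
  have yg: "inner (G2 - G1) (a - b) - q/2 * (norm (a - b))\<^sup>2 \<le> (norm (G2 - G1))\<^sup>2 / (2*q)"
    using young_q[of q "G2 - G1" "a - b"] p pq hq by simp
  have ab: "norm (b - a) = norm (a - b)" by (simp add: norm_minus_commute)
  have pac: "0 \<le> p/2 * (norm (a - c))\<^sup>2" using p by simp
  show ?thesis using fx fz i1 i2 i3 c1 c2 split yR yg pac by linarith
qed



definition Ssum :: "(nat \<Rightarrow> 'a::real_normed_vector) \<Rightarrow> nat \<Rightarrow> real" where
  "Ssum gg t = (\<Sum>s\<in>{1..t}. (norm (gg s - gg (s - 1)))\<^sup>2)"

lemma Ssum_0[simp]: "Ssum gg 0 = 0" by (simp add: Ssum_def)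
lemma Ssum_Suc: "Ssum gg (Suc t) = Ssum gg t + (norm (gg (Suc t) - gg t))\<^sup>2"
  by (simp add: Ssum_def)
lemma Ssum_nonneg: "Ssum gg t \<ge> 0" by (simp add: Ssum_def sum_nonneg)
lemma Ssum_mono: "s \<le> t \<Longrightarrow> Ssum gg s \<le> Ssum gg t"
  unfolding Ssum_def by (rule sum_mono2) auto

lemma gamma_eq: "adapeg_gamma \<eta> \<gamma>0 gg t = (1/\<eta>) * sqrt (\<eta>\<^sup>2 * \<gamma>0\<^sup>2 + Ssum gg t)"
  by (simp add: adapeg_gamma_def Ssum_def)

lemma gamma_nonneg: "\<eta> > 0 \<Longrightarrow> adapeg_gamma \<eta> \<gamma>0 gg t \<ge> 0"
  by (simp add: gamma_eq Ssum_nonneg)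

lemma gamma_0: "\<eta> > 0 \<Longrightarrow> \<gamma>0 \<ge> 0 \<Longrightarrow> adapeg_gamma \<eta> \<gamma>0 gg 0 = \<gamma>0"
  by (simp add: gamma_eq real_sqrt_mult)

lemma gamma_mono: "\<eta> > 0 \<Longrightarrow> s \<le> t \<Longrightarrow> adapeg_gamma \<eta> \<gamma>0 gg s \<le> adapeg_gamma \<eta> \<gamma>0 gg t"
  unfolding gamma_eq using Ssum_mono[of s t gg]
  by (intro mult_left_mono) auto

lemma gamma_zero: "\<eta> > 0 \<Longrightarrow> adapeg_gamma \<eta> \<gamma>0 gg (Suc t) = 0 \<Longrightarrow> gg (Suc t) = gg t"
proof -
  assume e: "\<eta> > 0" and z: "adapeg_gamma \<eta> \<gamma>0 gg (Suc t) = 0"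
  hence "\<eta>\<^sup>2 * \<gamma>0\<^sup>2 + Ssum gg (Suc t) = 0" by (simp add: gamma_eq)
  moreover have "\<eta>\<^sup>2 * \<gamma>0\<^sup>2 \<ge> 0" by simp
  ultimately have "Ssum gg (Suc t) = 0" using Ssum_nonneg[of gg "Suc t"] by linarith
  hence "(norm (gg (Suc t) - gg t))\<^sup>2 = 0" using Ssum_nonneg[of gg t] unfolding Ssum_Suc
    by (smt (verit) zero_le_power2)
  thus ?thesis by simp
qed

lemma gamma_le: "\<eta> > 0 \<Longrightarrow> \<gamma>0 \<ge> 0 \<Longrightarrow> adapeg_gamma \<eta> \<gamma>0 gg t \<le> \<gamma>0 + sqrt (Ssum gg t) / \<eta>"
proof -
  assume e: "\<eta> > 0" and g: "\<gamma>0 \<ge> 0"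
  have "sqrt (\<eta>\<^sup>2 * \<gamma>0\<^sup>2 + Ssum gg t) \<le> sqrt (\<eta>\<^sup>2 * \<gamma>0\<^sup>2) + sqrt (Ssum gg t)"
    by (rule sqrt_add_le_add_sqrt) (auto simp: Ssum_nonneg)
  also have "sqrt (\<eta>\<^sup>2 * \<gamma>0\<^sup>2) = \<eta> * \<gamma>0" using e g by (simp add: real_sqrt_mult)
  finally have "(1/\<eta>) * sqrt (\<eta>\<^sup>2 * \<gamma>0\<^sup>2 + Ssum gg t) \<le> (1/\<eta>) * (\<eta> * \<gamma>0 + sqrt (Ssum gg t))"
    using e by (intro mult_left_mono) auto
  thus ?thesis using e by (simp add: gamma_eq field_simps)
qed

lemma adagrad_term:
  fixes c S0 S1 :: real
  assumes c: "c \<ge> 0" and S0: "0 \<le> S0" and S01: "S0 \<le> S1"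
  shows "(S1 - S0) / sqrt (c + S1) \<le> 2 * (sqrt S1 - sqrt S0)"
proof (cases "S1 = 0")
  case True thus ?thesis using S0 S01 by simp
next
  case False
  hence S1p: "S1 > 0" using S0 S01 by simp
  have "sqrt S1 \<le> sqrt (c + S1)" using c by simp
  hence "(S1 - S0) / sqrt (c + S1) \<le> (S1 - S0) / sqrt S1"
    using S1p S01 by (intro divide_left_mono) auto
  moreover have "S1 - S0 = (sqrt S1 - sqrt S0) * (sqrt S1 + sqrt S0)"
    using S0 S1p by (simp add: algebra_simps)
  moreover have "(sqrt S1 - sqrt S0) * (sqrt S1 + sqrt S0) \<le> (sqrt S1 - sqrt S0) * (2 * sqrt S1)"
    using S0 S01 by (intro mult_left_mono) auto
  ultimately have "(S1 - S0) / sqrt (c + S1) \<le> (sqrt S1 - sqrt S0) * (2 * sqrt S1) / sqrt S1"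
    by (smt (verit) S1p divide_right_mono real_sqrt_gt_zero)
  also have "\<dots> = 2 * (sqrt S1 - sqrt S0)" using S1p by simp
  finally show ?thesis .
qed

lemma adagrad_sum:
  assumes e: "\<eta> > 0" and g: "\<gamma>0 \<ge> 0"
  shows "(\<Sum>t\<in>{1..T}. (norm (gg t - gg (t - 1)))\<^sup>2 / (2 * adapeg_gamma \<eta> \<gamma>0 gg t)) \<le> \<eta> * sqrt (Ssum gg T)"
proof (induction T)
  case 0 thus ?case by simp
next
  case (Suc T)
  have "(norm (gg (Suc T) - gg T))\<^sup>2 / (2 * adapeg_gamma \<eta> \<gamma>0 gg (Suc T))
        = \<eta>/2 * ((Ssum gg (Suc T) - Ssum gg T) / sqrt (\<eta>\<^sup>2 * \<gamma>0\<^sup>2 + Ssum gg (Suc T)))"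
    using e by (simp add: gamma_eq Ssum_Suc field_simps)
  also have "\<dots> \<le> \<eta>/2 * (2 * (sqrt (Ssum gg (Suc T)) - sqrt (Ssum gg T)))"
    using e by (intro mult_left_mono adagrad_term) (auto simp: Ssum_nonneg Ssum_mono)
  finally have "(norm (gg (Suc T) - gg T))\<^sup>2 / (2 * adapeg_gamma \<eta> \<gamma>0 gg (Suc T))
      \<le> \<eta> * sqrt (Ssum gg (Suc T)) - \<eta> * sqrt (Ssum gg T)" by (simp add: algebra_simps)
  thus ?case using Suc by simp
qed



lemma argmin_foc1:
  fixes X :: "'a::real_inner set"
  assumes cX: "convex X"
    and am: "is_arg_min (\<lambda>u. inner a u + 1/2 * \<alpha> * (norm (u - p))\<^sup>2) (\<lambda>u. u \<in> X) w"
    and \<alpha>: "\<alpha> \<ge> 0" and y: "y \<in> X"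
  shows "inner a (y - w) + \<alpha> * inner (w - p) (y - w) \<ge> 0"
proof -
  have "(\<lambda>u. inner a u + 1/2 * \<alpha> * (norm (u - p))\<^sup>2 + 1/2 * 0 * (norm (u - p))\<^sup>2)
      = (\<lambda>u. inner a u + 1/2 * \<alpha> * (norm (u - p))\<^sup>2)" by simp
  with am have "is_arg_min (\<lambda>u. inner a u + 1/2 * \<alpha> * (norm (u - p))\<^sup>2 + 1/2 * 0 * (norm (u - p))\<^sup>2) (\<lambda>u. u \<in> X) w"
    by simp
  from argmin_foc[OF cX this \<alpha> _ y] show ?thesis by simp
qed

lemma det_regret:
  fixes gg xx zz :: "nat \<Rightarrow> 'a::real_inner"
  assumes cX: "convex X" and xX: "\<And>t. xx t \<in> X" and zX: "\<And>t. zz t \<in> X"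
    and R: "\<forall>u\<in>X. \<forall>v\<in>X. norm (u - v) \<le> R"
    and e: "\<eta> > 0" and g0: "\<gamma>0 \<ge> 0"
    and xs: "\<forall>t\<ge>1. is_arg_min (\<lambda>u. inner (gg (t - 1)) u
                       + 1/2 * adapeg_gamma \<eta> \<gamma>0 gg (t - 1) * (norm (u - zz (t - 1)))\<^sup>2)
                   (\<lambda>u. u \<in> X) (xx t)"
    and zs: "\<forall>t\<ge>1. is_arg_min (\<lambda>u. inner (gg t) u
                       + 1/2 * adapeg_gamma \<eta> \<gamma>0 gg (t - 1) * (norm (u - zz (t - 1)))\<^sup>2
                       + 1/2 * (adapeg_gamma \<eta> \<gamma>0 gg t
                                - adapeg_gamma \<eta> \<gamma>0 gg (t - 1)) * (norm (u - xx t))\<^sup>2)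
                   (\<lambda>u. u \<in> X) (zz t)"
    and y: "y \<in> X"
  shows "(\<Sum>t\<in>{1..T}. inner (gg t) (xx t - y)) \<le> \<gamma>0/2 * R\<^sup>2 + (R\<^sup>2/(2*\<eta>) + \<eta>) * sqrt (Ssum gg T)"
proof -
  define \<Gamma> where "\<Gamma> = adapeg_gamma \<eta> \<gamma>0 gg"
  have \<Gamma>nn: "\<And>t. \<Gamma> t \<ge> 0" using e by (simp add: \<Gamma>_def gamma_nonneg)
  have \<Gamma>mono: "\<And>s t. s \<le> t \<Longrightarrow> \<Gamma> s \<le> \<Gamma> t" using e by (simp add: \<Gamma>_def gamma_mono)
  have main: "(\<Sum>t\<in>{1..T}. inner (gg t) (xx t - y)) \<le> \<Gamma> 0/2 * (norm (y - zz 0))\<^sup>2 - \<Gamma> T/2 * (norm (y - zz T))\<^sup>2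
      + (\<Gamma> T - \<Gamma> 0)/2 * R\<^sup>2 + (\<Sum>t\<in>{1..T}. (norm (gg t - gg (t - 1)))\<^sup>2 / (2 * \<Gamma> t))" for T
  proof (induction T)
    case 0 thus ?case by simp
  next
    case (Suc T)
    have fx: "inner (gg T) (zz (Suc T) - xx (Suc T)) + \<Gamma> T * inner (xx (Suc T) - zz T) (zz (Suc T) - xx (Suc T)) \<ge> 0"
    proof -
      have "is_arg_min (\<lambda>u. inner (gg T) u + 1/2 * \<Gamma> T * (norm (u - zz T))\<^sup>2) (\<lambda>u. u \<in> X) (xx (Suc T))"
        using xs unfolding \<Gamma>_def by fastforce
      from argmin_foc1[OF cX this \<Gamma>nn zX] show ?thesis .
    qed
    have fz: "inner (gg (Suc T)) (y - zz (Suc T)) + \<Gamma> T * inner (zz (Suc T) - zz T) (y - zz (Suc T))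
        + (\<Gamma> (Suc T) - \<Gamma> T) * inner (zz (Suc T) - xx (Suc T)) (y - zz (Suc T)) \<ge> 0"
    proof -
      have "is_arg_min (\<lambda>u. inner (gg (Suc T)) u + 1/2 * \<Gamma> T * (norm (u - zz T))\<^sup>2
             + 1/2 * (\<Gamma> (Suc T) - \<Gamma> T) * (norm (u - xx (Suc T)))\<^sup>2) (\<lambda>u. u \<in> X) (zz (Suc T))"
        using zs unfolding \<Gamma>_def by fastforce
      from argmin_foc[OF cX this \<Gamma>nn _ y] show ?thesis using \<Gamma>mono[of T "Suc T"] by simp
    qed
    have st: "inner (gg (Suc T)) (xx (Suc T) - y) \<le> \<Gamma> T/2 * (norm (y - zz T))\<^sup>2 - \<Gamma> (Suc T)/2 * (norm (y - zz (Suc T)))\<^sup>2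
        + (\<Gamma> (Suc T) - \<Gamma> T)/2 * R\<^sup>2 + (norm (gg (Suc T) - gg T))\<^sup>2 / (2 * \<Gamma> (Suc T))"
    proof (rule step_ineq[OF fx fz \<Gamma>nn])
      show "\<Gamma> T \<le> \<Gamma> (Suc T)" by (rule \<Gamma>mono) simp
      show "norm (y - xx (Suc T)) \<le> R" using R y xX by blast
      show "\<Gamma> (Suc T) = 0 \<Longrightarrow> gg (Suc T) = gg T" using gamma_zero[OF e] unfolding \<Gamma>_def by blast
    qed
    have s1: "(\<Sum>t\<in>{1..Suc T}. inner (gg t) (xx t - y)) = (\<Sum>t\<in>{1..T}. inner (gg t) (xx t - y)) + inner (gg (Suc T)) (xx (Suc T) - y)"
      by (simp add: sum.cl_ivl_Suc)
    have s2: "(\<Sum>t\<in>{1..Suc T}. (norm (gg t - gg (t - 1)))\<^sup>2 / (2 * \<Gamma> t)) = (\<Sum>t\<in>{1..T}. (norm (gg t - gg (t - 1)))\<^sup>2 / (2 * \<Gamma> t)) + (norm (gg (Suc T) - gg T))\<^sup>2 / (2 * \<Gamma> (Suc T))"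
      by (simp add: sum.cl_ivl_Suc)
    have s3: "(\<Gamma> (Suc T) - \<Gamma> 0)/2 * R\<^sup>2 = (\<Gamma> T - \<Gamma> 0)/2 * R\<^sup>2 + (\<Gamma> (Suc T) - \<Gamma> T)/2 * R\<^sup>2"
      by (simp add: field_simps)
    show ?case using Suc.IH st s1 s2 s3 by linarith
  qed
  have z0: "\<Gamma> 0/2 * (norm (y - zz 0))\<^sup>2 \<le> \<Gamma> 0/2 * R\<^sup>2"
    using R y zX \<Gamma>nn[of 0] by (intro mult_left_mono power_mono) auto
  have zT: "0 \<le> \<Gamma> T/2 * (norm (y - zz T))\<^sup>2" using \<Gamma>nn[of T] by simp
  have sm: "(\<Sum>t\<in>{1..T}. (norm (gg t - gg (t - 1)))\<^sup>2 / (2 * \<Gamma> t)) \<le> \<eta> * sqrt (Ssum gg T)"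
    unfolding \<Gamma>_def by (rule adagrad_sum[OF e g0])
  have gT: "\<Gamma> T/2 * R\<^sup>2 \<le> (\<gamma>0 + sqrt (Ssum gg T) / \<eta>)/2 * R\<^sup>2"
    using gamma_le[OF e g0] unfolding \<Gamma>_def by (intro mult_right_mono divide_right_mono) auto
  have "(\<gamma>0 + sqrt (Ssum gg T) / \<eta>)/2 * R\<^sup>2 + \<eta> * sqrt (Ssum gg T)
      = \<gamma>0/2 * R\<^sup>2 + (R\<^sup>2/(2*\<eta>) + \<eta>) * sqrt (Ssum gg T)" using e by (simp add: field_simps)
  moreover have "\<Gamma> 0/2 * R\<^sup>2 + (\<Gamma> T - \<Gamma> 0)/2 * R\<^sup>2 = \<Gamma> T/2 * R\<^sup>2" by (simp add: field_simps)
  ultimately show ?thesis using main[of T] z0 zT sm gT by linarith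
qed



lemma det_err:
  fixes gg xx zz :: "nat \<Rightarrow> 'a::real_inner" and F :: "'a \<Rightarrow> 'a"
  assumes cX: "convex X" and Xne: "X \<noteq> {}" and xX: "\<And>t. xx t \<in> X" and zX: "\<And>t. zz t \<in> X"
    and R: "\<forall>u\<in>X. \<forall>v\<in>X. norm (u - v) \<le> R"
    and Fm: "\<forall>u\<in>X. \<forall>v\<in>X. inner (F u - F v) (u - v) \<ge> 0"
    and e: "\<eta> > 0" and g0: "\<gamma>0 \<ge> 0" and T: "T \<ge> 1" and x0: "x0 \<in> X"
    and xs: "\<forall>t\<ge>1. is_arg_min (\<lambda>u. inner (gg (t - 1)) u
                       + 1/2 * adapeg_gamma \<eta> \<gamma>0 gg (t - 1) * (norm (u - zz (t - 1)))\<^sup>2)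
                   (\<lambda>u. u \<in> X) (xx t)"
    and zs: "\<forall>t\<ge>1. is_arg_min (\<lambda>u. inner (gg t) u
                       + 1/2 * adapeg_gamma \<eta> \<gamma>0 gg (t - 1) * (norm (u - zz (t - 1)))\<^sup>2
                       + 1/2 * (adapeg_gamma \<eta> \<gamma>0 gg t
                                - adapeg_gamma \<eta> \<gamma>0 gg (t - 1)) * (norm (u - xx t))\<^sup>2)
                   (\<lambda>u. u \<in> X) (zz t)"
  defines "B \<equiv> \<gamma>0/2 * R\<^sup>2 + (R\<^sup>2/(2*\<eta>) + \<eta>) * sqrt (Ssum gg T)
      - (\<Sum>t\<in>{1..T}. inner (gg t - F (xx t)) (xx t - x0)) + R * norm (\<Sum>t\<in>{1..T}. gg t - F (xx t))"
  shows "Err X F ((1 / real T) *\<^sub>R (\<Sum>t\<in>{1..T}. xx t)) \<le> 1 / real T * B"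
    and "0 \<le> Err X F ((1 / real T) *\<^sub>R (\<Sum>t\<in>{1..T}. xx t))"
proof -
  define xb where "xb = (1 / real T) *\<^sub>R (\<Sum>t\<in>{1..T}. xx t)"
  have Tp: "real T > 0" using T by simp
  have bnd: "inner (F y) (xb - y) \<le> 1 / real T * B" if y: "y \<in> X" for y
  proof -
    have "xb - y = (1 / real T) *\<^sub>R (\<Sum>t\<in>{1..T}. xx t - y)"
    proof -
      have "(\<Sum>t\<in>{1..T}. y) = real T *\<^sub>R y" by (simp add: sum_constant_scaleR)
      thus ?thesis using Tp by (simp add: xb_def sum_subtractf scaleR_diff_right)
    qed
    hence "inner (F y) (xb - y) = 1 / real T * (\<Sum>t\<in>{1..T}. inner (F y) (xx t - y))"
      by (simp add: inner_sum_right)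
    also have "(\<Sum>t\<in>{1..T}. inner (F y) (xx t - y)) \<le> (\<Sum>t\<in>{1..T}. inner (F (xx t)) (xx t - y))"
    proof (rule sum_mono)
      fix t assume "t \<in> {1..T}"
      have "inner (F (xx t) - F y) (xx t - y) \<ge> 0" using Fm xX y by blast
      thus "inner (F y) (xx t - y) \<le> inner (F (xx t)) (xx t - y)" by (simp add: inner_diff_left)
    qed
    also have "(\<Sum>t\<in>{1..T}. inner (F (xx t)) (xx t - y)) =
        (\<Sum>t\<in>{1..T}. inner (gg t) (xx t - y)) - (\<Sum>t\<in>{1..T}. inner (gg t - F (xx t)) (xx t - x0))
        + inner (\<Sum>t\<in>{1..T}. gg t - F (xx t)) (y - x0)"
    proof -
      have "(\<Sum>t\<in>{1..T}. inner (gg t) (xx t - y)) - (\<Sum>t\<in>{1..T}. inner (gg t - F (xx t)) (xx t - x0))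
        + inner (\<Sum>t\<in>{1..T}. gg t - F (xx t)) (y - x0)
        = (\<Sum>t\<in>{1..T}. inner (gg t) (xx t - y) - inner (gg t - F (xx t)) (xx t - x0) + inner (gg t - F (xx t)) (y - x0))"
        unfolding inner_sum_left by (simp only: sum.distrib sum_subtractf)
      also have "\<dots> = (\<Sum>t\<in>{1..T}. inner (F (xx t)) (xx t - y))"
        by (rule sum.cong) (simp_all add: inner_diff_left inner_diff_right)
      finally show ?thesis by simp
    qed
    also have "\<dots> \<le> B"
    proof -
      have "(\<Sum>t\<in>{1..T}. inner (gg t) (xx t - y)) \<le> \<gamma>0/2 * R\<^sup>2 + (R\<^sup>2/(2*\<eta>) + \<eta>) * sqrt (Ssum gg T)"
        by (rule det_regret[OF cX xX zX R e g0 xs zs y])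
      moreover have "inner (\<Sum>t\<in>{1..T}. gg t - F (xx t)) (y - x0) \<le> R * norm (\<Sum>t\<in>{1..T}. gg t - F (xx t))"
      proof -
        have "inner (\<Sum>t\<in>{1..T}. gg t - F (xx t)) (y - x0) \<le> norm (\<Sum>t\<in>{1..T}. gg t - F (xx t)) * norm (y - x0)"
          by (rule norm_cauchy_schwarz)
        also have "\<dots> \<le> norm (\<Sum>t\<in>{1..T}. gg t - F (xx t)) * R"
          using R y x0 by (intro mult_left_mono) auto
        finally show ?thesis by (simp add: mult.commute)
      qed
      ultimately show ?thesis unfolding B_def by linarith
    qed
    finally show ?thesis using Tp by (simp add: divide_right_mono)
  qed
  show "Err X F xb \<le> 1 / real T * B"
    unfolding Err_def using Xne bnd by (intro cSUP_least) auto
  have xbX: "xb \<in> X"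
  proof -
    have "(\<Sum>t\<in>{1..T}. (1 / real T) *\<^sub>R xx t) \<in> X"
      using Tp by (intro convex_sum[OF _ cX]) (auto simp: xX)
    thus ?thesis by (simp add: xb_def scaleR_sum_right)
  qed
  have "inner (F xb) (xb - xb) \<le> Err X F xb"
    unfolding Err_def using bnd xbX by (intro cSUP_upper) (auto simp: bdd_above_def)
  thus "0 \<le> Err X F xb" by simp
qed



lemma sqrt_jensen:
  assumes P: "prob_space M" and fi: "integrable M f" and fnn: "\<And>\<omega>. \<omega> \<in> space M \<Longrightarrow> f \<omega> \<ge> 0"
    and fB: "integral\<^sup>L M f \<le> B"
  shows "integrable M (\<lambda>\<omega>. sqrt (f \<omega>))" and "(\<integral>\<omega>. sqrt (f \<omega>) \<partial>M) \<le> sqrt B"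
proof -
  interpret prob_space M by (rule P)
  have fm[measurable]: "f \<in> borel_measurable M" using fi by auto
  show si: "integrable M (\<lambda>\<omega>. sqrt (f \<omega>))"
  proof (rule Bochner_Integration.integrable_bound[of _ "\<lambda>\<omega>. 1 + f \<omega>"])
    show "integrable M (\<lambda>\<omega>. 1 + f \<omega>)" using fi by simp
    show "(\<lambda>\<omega>. sqrt (f \<omega>)) \<in> borel_measurable M" by measurable
    show "AE \<omega> in M. norm (sqrt (f \<omega>)) \<le> norm (1 + f \<omega>)"
    proof (rule AE_I2)
      fix \<omega> assume w: "\<omega> \<in> space M"
      have "f \<omega> \<le> (1 + f \<omega>)\<^sup>2" using fnn[OF w] by (simp add: power2_eq_square algebra_simps)
      hence "sqrt (f \<omega>) \<le> sqrt ((1 + f \<omega>)\<^sup>2)" by (rule real_sqrt_le_mono)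
      hence "sqrt (f \<omega>) \<le> 1 + f \<omega>" using fnn[OF w] by simp
      thus "norm (sqrt (f \<omega>)) \<le> norm (1 + f \<omega>)" using fnn[OF w] by simp
    qed
  qed
  have B0: "B \<ge> 0" using fB integral_nonneg_AE[of f M] fnn by (smt (verit) AE_I2)
  have gen: "(\<integral>\<omega>. sqrt (f \<omega>) \<partial>M) \<le> (B / c + c) / 2" if c: "c > 0" for c
  proof -
    have "(\<integral>\<omega>. sqrt (f \<omega>) \<partial>M) \<le> (\<integral>\<omega>. (f \<omega> / c + c) / 2 \<partial>M)"
    proof (rule integral_mono)
      show "integrable M (\<lambda>\<omega>. (f \<omega> / c + c) / 2)" using fi by simp
      fix \<omega> assume w: "\<omega> \<in> space M"
      have "0 \<le> (sqrt (f \<omega>) - c)\<^sup>2" by simp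
      also have "\<dots> = f \<omega> - 2 * c * sqrt (f \<omega>) + c\<^sup>2" using fnn[OF w] by (simp add: power2_diff)
      finally have "2 * c * sqrt (f \<omega>) \<le> f \<omega> + c\<^sup>2" by simp
      thus "sqrt (f \<omega>) \<le> (f \<omega> / c + c) / 2" using c by (simp add: field_simps power2_eq_square)
    qed (rule si)
    also have "\<dots> = (integral\<^sup>L M f / c + c) / 2" using fi by (simp add: prob_space)
    also have "\<dots> \<le> (B / c + c) / 2" using fB c by (simp add: divide_right_mono)
    finally show ?thesis .
  qed
  show "(\<integral>\<omega>. sqrt (f \<omega>) \<partial>M) \<le> sqrt B"
  proof (cases "B = 0")
    case True
    have "(\<integral>\<omega>. sqrt (f \<omega>) \<partial>M) \<le> c" if "c > 0" for c
      using gen[of "2*c"] that True by simp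
    hence "(\<integral>\<omega>. sqrt (f \<omega>) \<partial>M) \<le> 0" by (meson dense not_le)
    thus ?thesis using True by simp
  next
    case False
    hence "sqrt B > 0" using B0 by simp
    have "B / sqrt B = sqrt B" using B0 by (metis real_div_sqrt)
    with gen[OF \<open>sqrt B > 0\<close>] show ?thesis by simp
  qed
qed

lemma orth_scalar:
  fixes u f :: "'w \<Rightarrow> real"
  assumes P: "prob_space M" and sub: "subalgebra M N" and ui: "integrable M u"
    and u0: "\<forall>A\<in>sets N. (\<integral>\<omega>\<in>A. u \<omega> \<partial>M) = 0"
    and fN: "f \<in> borel_measurable N" and fu: "integrable M (\<lambda>\<omega>. f \<omega> * u \<omega>)"
  shows "(\<integral>\<omega>. f \<omega> * u \<omega> \<partial>M) = 0"
proof -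
  interpret prob_space M by (rule P)
  interpret finite_measure_subalgebra M N
    by unfold_locales (rule sub)
  have um: "u \<in> borel_measurable M" using ui by auto
  have ae: "AE \<omega> in M. real_cond_exp M N u \<omega> = (\<lambda>_. 0) \<omega>"
    by (rule real_cond_exp_charact) (use u0 ui in auto)
  have "(\<integral>\<omega>. f \<omega> * u \<omega> \<partial>M) = (\<integral>\<omega>. f \<omega> * real_cond_exp M N u \<omega> \<partial>M)"
    using real_cond_exp_intg(2)[OF fu fN um] by simp
  also have "\<dots> = (\<integral>\<omega>. 0 \<partial>M)"
    using ae by (intro integral_cong_AE) (auto intro!: borel_measurable_times measurable_from_subalg[OF sub fN])
  finally show ?thesis by simp
qed

lemma norm_prod_le_sq: "norm (a::'a::real_normed_vector) * norm (b::'b::real_normed_vector) \<le> (norm a)\<^sup>2 + (norm b)\<^sup>2"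
proof -
  have "0 \<le> (norm a - norm b)\<^sup>2" by simp
  hence "2 * (norm a * norm b) \<le> (norm a)\<^sup>2 + (norm b)\<^sup>2" by (simp add: power2_diff)
  moreover have "0 \<le> norm a * norm b" by simp
  ultimately show ?thesis by linarith
qed

lemma orth_vec:
  fixes h e :: "'w \<Rightarrow> real^'n"
  assumes P: "prob_space M" and sub: "subalgebra M N" and ei: "integrable M e"
    and e0: "\<forall>A\<in>sets N. (LINT \<omega>:A|M. e \<omega>) = 0"
    and hN: "h \<in> borel_measurable N" and h2: "integrable M (\<lambda>\<omega>. (norm (h \<omega>))\<^sup>2)"
    and e2: "integrable M (\<lambda>\<omega>. (norm (e \<omega>))\<^sup>2)"
  shows "integrable M (\<lambda>\<omega>. inner (h \<omega>) (e \<omega>))" and "(\<integral>\<omega>. inner (h \<omega>) (e \<omega>) \<partial>M) = 0"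
proof -
  have hM[measurable]: "h \<in> borel_measurable M" by (rule measurable_from_subalg[OF sub hN])
  have eM[measurable]: "e \<in> borel_measurable M" using ei by auto
  have ci: "integrable M (\<lambda>\<omega>. h \<omega> $ i * e \<omega> $ i)" for i
  proof (rule Bochner_Integration.integrable_bound[of _ "\<lambda>\<omega>. (norm (h \<omega>))\<^sup>2 + (norm (e \<omega>))\<^sup>2"])
    show "integrable M (\<lambda>\<omega>. (norm (h \<omega>))\<^sup>2 + (norm (e \<omega>))\<^sup>2)" using h2 e2 by simp
    show "(\<lambda>\<omega>. h \<omega> $ i * e \<omega> $ i) \<in> borel_measurable M"
      using measurable_compose[OF hM borel_measurable_nth] measurable_compose[OF eM borel_measurable_nth] by measurable
    show "AE \<omega> in M. norm (h \<omega> $ i * e \<omega> $ i) \<le> norm ((norm (h \<omega>))\<^sup>2 + (norm (e \<omega>))\<^sup>2)"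
    proof (rule AE_I2)
      fix \<omega>
      have "norm (h \<omega> $ i * e \<omega> $ i) = \<bar>h \<omega> $ i\<bar> * \<bar>e \<omega> $ i\<bar>" by (simp add: abs_mult)
      also have "\<dots> \<le> norm (h \<omega>) * norm (e \<omega>)"
        by (intro mult_mono component_le_norm_cart) auto
      also have "\<dots> \<le> (norm (h \<omega>))\<^sup>2 + (norm (e \<omega>))\<^sup>2" by (rule norm_prod_le_sq)
      finally show "norm (h \<omega> $ i * e \<omega> $ i) \<le> norm ((norm (h \<omega>))\<^sup>2 + (norm (e \<omega>))\<^sup>2)" by simp
    qed
  qed
  have c0: "(\<integral>\<omega>. h \<omega> $ i * e \<omega> $ i \<partial>M) = 0" for i
  proof (rule orth_scalar[OF P sub])
    show "integrable M (\<lambda>\<omega>. e \<omega> $ i)" by (rule integrable_bounded_linear[OF bounded_linear_vec_nth ei])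
    show "(\<lambda>\<omega>. h \<omega> $ i) \<in> borel_measurable N" using measurable_compose[OF hN borel_measurable_nth] .
    show "integrable M (\<lambda>\<omega>. h \<omega> $ i * e \<omega> $ i)" by (rule ci)
    show "\<forall>A\<in>sets N. (\<integral>\<omega>\<in>A. e \<omega> $ i \<partial>M) = 0"
    proof
      fix A assume A: "A \<in> sets N"
      hence AM: "A \<in> sets M" using sub by (auto simp: subalgebra_def)
      have "(\<integral>\<omega>\<in>A. e \<omega> $ i \<partial>M) = (\<integral>\<omega>. (indicator A \<omega> *\<^sub>R e \<omega>) $ i \<partial>M)"
        by (simp add: set_lebesgue_integral_def)
      also have "\<dots> = (LINT \<omega>:A|M. e \<omega>) $ i"
        unfolding set_lebesgue_integral_def
        by (rule integral_bounded_linear[OF bounded_linear_vec_nth integrable_mult_indicator[OF AM ei]])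
      also have "\<dots> = 0" using e0 A by simp
      finally show "(\<integral>\<omega>\<in>A. e \<omega> $ i \<partial>M) = 0" .
    qed
  qed
  have eq: "(\<lambda>\<omega>. inner (h \<omega>) (e \<omega>)) = (\<lambda>\<omega>. \<Sum>i\<in>UNIV. h \<omega> $ i * e \<omega> $ i)"
    by (simp add: inner_vec_def)
  show "integrable M (\<lambda>\<omega>. inner (h \<omega>) (e \<omega>))" unfolding eq by (rule Bochner_Integration.integrable_sum) (rule ci)
  show "(\<integral>\<omega>. inner (h \<omega>) (e \<omega>) \<partial>M) = 0" unfolding eq
    by (subst Bochner_Integration.integral_sum) (auto intro: ci simp: c0)
qed


theorem lemmaB12:
  fixes X :: "(real^'n) set" and F :: "real^'n \<Rightarrow> real^'n"
    and M :: "'w measure" and Fl :: "nat \<Rightarrow> 'w measure"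
    and g x z :: "nat \<Rightarrow> 'w \<Rightarrow> real^'n"
    and x0 :: "real^'n"
    and R \<sigma> \<gamma>0 \<eta> :: real and T :: nat
  assumes prob: "prob_space M"
    and X_ne: "X \<noteq> {}" and X_closed: "closed X" and X_convex: "convex X" and X_bdd: "bounded X"
    and R_diam: "\<forall>u\<in>X. \<forall>v\<in>X. norm (u - v) \<le> R"
    and F_mono: "\<forall>u\<in>X. \<forall>v\<in>X. inner (F u - F v) (u - v) \<ge> 0"
    and F_bdd: "bdd_above ((\<lambda>u. norm (F u)) ` X)"
    and \<gamma>0_nonneg: "\<gamma>0 \<ge> 0" and \<eta>_pos: "\<eta> > 0" and \<sigma>_nonneg: "\<sigma> \<ge> 0"
    and T_pos: "T \<ge> 1"
    \<comment> \<open>natural filtration of the process: F_t contains the history up to the query of x_t\<close>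
    and filt: "is_filtration M Fl"
    and g_meas: "\<forall>t. g t \<in> borel_measurable (Fl (Suc t))"
    and x_meas: "\<forall>t. x t \<in> borel_measurable (Fl t)"
    and z_meas: "\<forall>t. z t \<in> borel_measurable (Fl (Suc t))"
    \<comment> \<open>stochastic oracle: E[g_t | F_t] = F(x_t) and E||g_t - F(x_t)||^2 \<le> sigma^2\<close>
    and g_int: "\<forall>t. integrable M (g t)"
    and Fx_meas: "\<forall>t. (\<lambda>\<omega>. F (x t \<omega>)) \<in> borel_measurable (Fl t)"
    and unbiased: "\<forall>t. \<forall>A\<in>sets (Fl t).
        (LINT \<omega>:A|M. g t \<omega>) = (LINT \<omega>:A|M. F (x t \<omega>))"
    and variance: "\<forall>t. (\<integral>\<^sup>+\<omega>. ennreal ((norm (g t \<omega> - F (x t \<omega>)))\<^sup>2) \<partial>M) \<le> ennreal (\<sigma>\<^sup>2)"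
    \<comment> \<open>algorithm AdaPEG\<close>
    and x0_in: "x0 \<in> X"
    and init: "\<forall>\<omega>\<in>space M. x 0 \<omega> = x0 \<and> z 0 \<omega> = x0"
    and x_step: "\<forall>t\<ge>1. \<forall>\<omega>\<in>space M.
        is_arg_min (\<lambda>u. inner (g (t - 1) \<omega>) u
                       + 1/2 * adapeg_gamma \<eta> \<gamma>0 (\<lambda>s. g s \<omega>) (t - 1) * (norm (u - z (t - 1) \<omega>))\<^sup>2)
                   (\<lambda>u. u \<in> X) (x t \<omega>)"
    and z_step: "\<forall>t\<ge>1. \<forall>\<omega>\<in>space M.
        is_arg_min (\<lambda>u. inner (g t \<omega>) u
                       + 1/2 * adapeg_gamma \<eta> \<gamma>0 (\<lambda>s. g s \<omega>) (t - 1) * (norm (u - z (t - 1) \<omega>))\<^sup>2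
                       + 1/2 * (adapeg_gamma \<eta> \<gamma>0 (\<lambda>s. g s \<omega>) t
                                - adapeg_gamma \<eta> \<gamma>0 (\<lambda>s. g s \<omega>) (t - 1)) * (norm (u - x t \<omega>))\<^sup>2)
                   (\<lambda>u. u \<in> X) (z t \<omega>)"
  shows "(\<integral>\<^sup>+\<omega>. ennreal (Err X F ((1 / real T) *\<^sub>R (\<Sum>t\<in>{1..T}. x t \<omega>))) \<partial>M)
         \<le> ennreal ((1 / real T) *
              (1/2 * \<gamma>0 * R\<^sup>2
               + (sqrt 2 * R\<^sup>2 / \<eta> + 4 * sqrt 2 * \<eta> + R)
                 * ((SUP u\<in>X. norm (F u)) + \<sigma>) * sqrt (real T + 1)))"
proof -
  interpret prob_space M by (rule prob)
  have sub: "\<And>t. subalgebra M (Fl t)" using filt by (simp add: is_filtration_def)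
  have Flmono: "\<And>s t. s \<le> t \<Longrightarrow> sets (Fl s) \<subseteq> sets (Fl t)" using filt by (simp add: is_filtration_def)
  have spFl: "\<And>t. space (Fl t) = space M" using sub by (simp add: subalgebra_def)
  have subFl: "\<And>s t. s \<le> t \<Longrightarrow> subalgebra (Fl t) (Fl s)"
    using Flmono spFl by (simp add: subalgebra_def)
  have liftFl: "\<And>s t f. s \<le> t \<Longrightarrow> f \<in> borel_measurable (Fl s) \<Longrightarrow> f \<in> borel_measurable (Fl t)"
    using subFl measurable_from_subalg by blast
  have gM[measurable]: "\<And>t. g t \<in> borel_measurable M"
    using g_meas measurable_from_subalg[OF sub] by blast
  have xM[measurable]: "\<And>t. x t \<in> borel_measurable M"
    using x_meas measurable_from_subalg[OF sub] by blast
  have FxM[measurable]: "\<And>t. (\<lambda>\<omega>. F (x t \<omega>)) \<in> borel_measurable M"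
    using Fx_meas measurable_from_subalg[OF sub] by blast
  have xX: "\<And>t \<omega>. \<omega> \<in> space M \<Longrightarrow> x t \<omega> \<in> X"
  proof -
    fix t \<omega> assume w: "\<omega> \<in> space M"
    show "x t \<omega> \<in> X"
    proof (cases "t = 0")
      case True thus ?thesis using init w x0_in by simp
    next
      case False thus ?thesis using x_step w by (auto simp: is_arg_min_def)
    qed
  qed
  have zX: "\<And>t \<omega>. \<omega> \<in> space M \<Longrightarrow> z t \<omega> \<in> X"
  proof -
    fix t \<omega> assume w: "\<omega> \<in> space M"
    show "z t \<omega> \<in> X"
    proof (cases "t = 0")
      case True thus ?thesis using init w x0_in by simp
    next
      case False thus ?thesis using z_step w by (auto simp: is_arg_min_def)
    qed
  qed
  define G where "G = (SUP u\<in>X. norm (F u))"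
  have FG: "\<And>u. u \<in> X \<Longrightarrow> norm (F u) \<le> G" unfolding G_def using F_bdd by (rule cSUP_upper2) auto
  have G0: "G \<ge> 0" using FG[OF x0_in] norm_ge_zero[of "F x0"] by linarith
  have R0: "R \<ge> 0" using R_diam x0_in by force
  have FxG: "\<And>t \<omega>. \<omega> \<in> space M \<Longrightarrow> norm (F (x t \<omega>)) \<le> G" using FG xX by blast
  define e where "e = (\<lambda>t \<omega>. g t \<omega> - F (x t \<omega>))"
  have eM[measurable]: "\<And>t. e t \<in> borel_measurable M" unfolding e_def by measurable
  have eN: "\<And>t. e t \<in> borel_measurable (Fl (Suc t))"
  proof -
    fix t
    have "(\<lambda>\<omega>. F (x t \<omega>)) \<in> borel_measurable (Fl (Suc t))" using liftFl[OF _ Fx_meas[rule_format]] by simp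
    thus "e t \<in> borel_measurable (Fl (Suc t))" unfolding e_def using g_meas by (intro borel_measurable_diff) auto
  qed
  have Fx_int: "\<And>t. integrable M (\<lambda>\<omega>. F (x t \<omega>))"
  proof -
    fix t
    show "integrable M (\<lambda>\<omega>. F (x t \<omega>))"
      by (rule Bochner_Integration.integrable_bound[of _ "\<lambda>_. G"]) (auto intro!: AE_I2 simp: FxG G0)
  qed
  have e_int: "\<And>t. integrable M (e t)" unfolding e_def using g_int Fx_int by (intro Bochner_Integration.integrable_diff) auto
  have e2: "\<And>t. integrable M (\<lambda>\<omega>. (norm (e t \<omega>))\<^sup>2) \<and> (\<integral>\<omega>. (norm (e t \<omega>))\<^sup>2 \<partial>M) \<le> \<sigma>\<^sup>2"
  proof -
    fix t
    have nn: "(\<integral>\<^sup>+\<omega>. ennreal ((norm (e t \<omega>))\<^sup>2) \<partial>M) \<le> ennreal (\<sigma>\<^sup>2)"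
      using variance unfolding e_def by blast
    have i: "integrable M (\<lambda>\<omega>. (norm (e t \<omega>))\<^sup>2)"
      by (rule integrableI_nonneg) (use nn in \<open>auto simp: top.not_eq_extremum intro: le_less_trans\<close>)
    have "ennreal (\<integral>\<omega>. (norm (e t \<omega>))\<^sup>2 \<partial>M) \<le> ennreal (\<sigma>\<^sup>2)"
      using nn nn_integral_eq_integral[OF i] by simp
    hence "(\<integral>\<omega>. (norm (e t \<omega>))\<^sup>2 \<partial>M) \<le> \<sigma>\<^sup>2" by (simp add: ennreal_le_iff)
    thus "integrable M (\<lambda>\<omega>. (norm (e t \<omega>))\<^sup>2) \<and> (\<integral>\<omega>. (norm (e t \<omega>))\<^sup>2 \<partial>M) \<le> \<sigma>\<^sup>2" using i by simp
  qed
  have e0: "\<And>t. \<forall>A\<in>sets (Fl t). (LINT \<omega>:A|M. e t \<omega>) = 0"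
  proof (intro ballI)
    fix t A assume A: "A \<in> sets (Fl t)"
    hence AM: "A \<in> sets M" using sub by (auto simp: subalgebra_def)
    have "(LINT \<omega>:A|M. e t \<omega>) = (LINT \<omega>:A|M. g t \<omega>) - (LINT \<omega>:A|M. F (x t \<omega>))"
      unfolding e_def
      by (rule set_integral_diff) (auto simp: set_integrable_def intro!: integrable_mult_indicator AM g_int[rule_format] Fx_int)
    thus "(LINT \<omega>:A|M. e t \<omega>) = 0" using unbiased A by simp
  qed
  have orth1: "\<And>t. integrable M (\<lambda>\<omega>. inner (x t \<omega> - x0) (e t \<omega>)) \<and> (\<integral>\<omega>. inner (x t \<omega> - x0) (e t \<omega>) \<partial>M) = 0"
  proof -
    fix t
    have hN: "(\<lambda>\<omega>. x t \<omega> - x0) \<in> borel_measurable (Fl t)" using x_meas by (intro borel_measurable_diff) auto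
    have h2: "integrable M (\<lambda>\<omega>. (norm (x t \<omega> - x0))\<^sup>2)"
    proof (rule Bochner_Integration.integrable_bound[of _ "\<lambda>_. R\<^sup>2"])
      show "integrable M (\<lambda>_. R\<^sup>2)" by simp
      show "(\<lambda>\<omega>. (norm (x t \<omega> - x0))\<^sup>2) \<in> borel_measurable M" by measurable
      show "AE \<omega> in M. norm ((norm (x t \<omega> - x0))\<^sup>2) \<le> norm (R\<^sup>2)"
      proof (rule AE_I2)
        fix \<omega> assume w: "\<omega> \<in> space M"
        have "norm (x t \<omega> - x0) \<le> R" using R_diam xX[OF w] x0_in by blast
        thus "norm ((norm (x t \<omega> - x0))\<^sup>2) \<le> norm (R\<^sup>2)" by (simp add: power_mono)
      qed
    qed
    show "integrable M (\<lambda>\<omega>. inner (x t \<omega> - x0) (e t \<omega>)) \<and> (\<integral>\<omega>. inner (x t \<omega> - x0) (e t \<omega>) \<partial>M) = 0"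
      using orth_vec[OF prob sub[of t] e_int e0 hN h2] e2[of t] by simp
  qed
  define E where "E = (\<lambda>T \<omega>. \<Sum>t\<in>{1..T}. e t \<omega>)"
  have EM[measurable]: "\<And>T. E T \<in> borel_measurable M" unfolding E_def by measurable
  have EN: "\<And>T. E T \<in> borel_measurable (Fl (Suc T))"
    unfolding E_def by (intro borel_measurable_sum liftFl[OF _ eN]) auto
  have mart: "integrable M (\<lambda>\<omega>. (norm (E T \<omega>))\<^sup>2) \<and> (\<integral>\<omega>. (norm (E T \<omega>))\<^sup>2 \<partial>M) \<le> real T * \<sigma>\<^sup>2" for T
  proof (induction T)
    case 0 thus ?case by (simp add: E_def)
  next
    case (Suc T)
    have Es: "\<And>\<omega>. E (Suc T) \<omega> = E T \<omega> + e (Suc T) \<omega>" by (simp add: E_def)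
    have o: "integrable M (\<lambda>\<omega>. inner (E T \<omega>) (e (Suc T) \<omega>)) \<and> (\<integral>\<omega>. inner (E T \<omega>) (e (Suc T) \<omega>) \<partial>M) = 0"
      using orth_vec[OF prob sub[of "Suc T"] e_int e0 EN] Suc.IH e2[of "Suc T"] by simp
    have eq: "(\<lambda>\<omega>. (norm (E (Suc T) \<omega>))\<^sup>2) = (\<lambda>\<omega>. (norm (E T \<omega>))\<^sup>2 + 2 * inner (E T \<omega>) (e (Suc T) \<omega>) + (norm (e (Suc T) \<omega>))\<^sup>2)"
      unfolding Es by (simp add: nsq_add)
    have i: "integrable M (\<lambda>\<omega>. (norm (E (Suc T) \<omega>))\<^sup>2)"
      unfolding eq using Suc.IH o e2[of "Suc T"] by simp
    have "(\<integral>\<omega>. (norm (E (Suc T) \<omega>))\<^sup>2 \<partial>M) = (\<integral>\<omega>. (norm (E T \<omega>))\<^sup>2 \<partial>M) + 2 * (\<integral>\<omega>. inner (E T \<omega>) (e (Suc T) \<omega>) \<partial>M) + (\<integral>\<omega>. (norm (e (Suc T) \<omega>))\<^sup>2 \<partial>M)"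
      unfolding eq using Suc.IH o e2[of "Suc T"] by simp
    also have "\<dots> \<le> real T * \<sigma>\<^sup>2 + 0 + \<sigma>\<^sup>2" using Suc.IH o e2[of "Suc T"] by simp
    finally show ?case using i by (simp add: algebra_simps)
  qed
  define hb where "hb = (\<lambda>s \<omega>. 4 * ((norm (e s \<omega>))\<^sup>2 + (norm (e (s - 1) \<omega>))\<^sup>2) + 8 * G\<^sup>2)"
  have Sle: "\<And>\<omega>. \<omega> \<in> space M \<Longrightarrow> Ssum (\<lambda>s. g s \<omega>) T \<le> (\<Sum>s\<in>{1..T}. hb s \<omega>)"
  proof -
    fix \<omega> assume w: "\<omega> \<in> space M"
    show "Ssum (\<lambda>s. g s \<omega>) T \<le> (\<Sum>s\<in>{1..T}. hb s \<omega>)"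
      unfolding Ssum_def
    proof (rule sum_mono)
      fix s
      define a where "a = norm (e s \<omega>)"
      define b where "b = norm (e (s - 1) \<omega>)"
      have "g s \<omega> - g (s - 1) \<omega> = (e s \<omega> - e (s - 1) \<omega>) + (F (x s \<omega>) - F (x (s - 1) \<omega>))"
        by (simp add: e_def)
      hence "norm (g s \<omega> - g (s - 1) \<omega>) \<le> norm (e s \<omega> - e (s - 1) \<omega>) + norm (F (x s \<omega>) - F (x (s - 1) \<omega>))"
        by (metis norm_triangle_ineq)
      also have "norm (e s \<omega> - e (s - 1) \<omega>) \<le> a + b" unfolding a_def b_def by (rule norm_triangle_ineq4)
      also have "norm (F (x s \<omega>) - F (x (s - 1) \<omega>)) \<le> G + G"
        using norm_triangle_ineq4[of "F (x s \<omega>)" "F (x (s - 1) \<omega>)"] FxG[OF w, of s] FxG[OF w, of "s - 1"] by linarith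
      finally have n1: "norm (g s \<omega> - g (s - 1) \<omega>) \<le> a + b + 2 * G" by simp
      have "(norm (g s \<omega> - g (s - 1) \<omega>))\<^sup>2 \<le> (a + b + 2 * G)\<^sup>2"
        using n1 by (intro power_mono) auto
      also have "\<dots> \<le> 4 * (a\<^sup>2 + b\<^sup>2) + 8 * G\<^sup>2"
      proof -
        have f1: "0 \<le> (a + b - 2 * G)\<^sup>2" by simp
        have f2: "0 \<le> (a - b)\<^sup>2" by simp
        show ?thesis using f1 f2 unfolding power2_eq_square by (simp add: algebra_simps)
      qed
      finally show "(norm (g s \<omega> - g (s - 1) \<omega>))\<^sup>2 \<le> hb s \<omega>" by (simp add: hb_def a_def b_def)
    qed
  qed
  have hb_int: "\<And>s. integrable M (hb s)" unfolding hb_def using e2 by simp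
  have hb_le: "\<And>s. (\<integral>\<omega>. hb s \<omega> \<partial>M) \<le> 8 * \<sigma>\<^sup>2 + 8 * G\<^sup>2"
  proof -
    fix s
    have "(\<integral>\<omega>. hb s \<omega> \<partial>M) = 4 * ((\<integral>\<omega>. (norm (e s \<omega>))\<^sup>2 \<partial>M) + (\<integral>\<omega>. (norm (e (s - 1) \<omega>))\<^sup>2 \<partial>M)) + 8 * G\<^sup>2"
      unfolding hb_def using e2 by (simp add: prob_space)
    thus "(\<integral>\<omega>. hb s \<omega> \<partial>M) \<le> 8 * \<sigma>\<^sup>2 + 8 * G\<^sup>2" using e2[of s] e2[of "s - 1"] by simp
  qed
  define f where "f = (\<lambda>\<omega>. \<Sum>s\<in>{1..T}. hb s \<omega>)"
  have f_int: "integrable M f" unfolding f_def using hb_int by (rule Bochner_Integration.integrable_sum)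
  have f_nn: "\<And>\<omega>. \<omega> \<in> space M \<Longrightarrow> f \<omega> \<ge> 0" unfolding f_def hb_def by (intro sum_nonneg) auto
  have f_le: "integral\<^sup>L M f \<le> real T * (8 * \<sigma>\<^sup>2 + 8 * G\<^sup>2)"
  proof -
    have "integral\<^sup>L M f = (\<Sum>s\<in>{1..T}. \<integral>\<omega>. hb s \<omega> \<partial>M)"
      unfolding f_def using hb_int by (simp add: Bochner_Integration.integral_sum)
    also have "\<dots> \<le> (\<Sum>s\<in>{1..T}. 8 * \<sigma>\<^sup>2 + 8 * G\<^sup>2)" by (rule sum_mono) (rule hb_le)
    finally show ?thesis by simp
  qed
  have sq_f: "(\<integral>\<omega>. sqrt (f \<omega>) \<partial>M) \<le> sqrt (real T * (8 * \<sigma>\<^sup>2 + 8 * G\<^sup>2))" and sq_f_int: "integrable M (\<lambda>\<omega>. sqrt (f \<omega>))"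
    using sqrt_jensen[OF prob f_int f_nn f_le] by auto
  have SM[measurable]: "(\<lambda>\<omega>. sqrt (Ssum (\<lambda>s. g s \<omega>) T)) \<in> borel_measurable M"
    unfolding Ssum_def by measurable
  have sqS_int: "integrable M (\<lambda>\<omega>. sqrt (Ssum (\<lambda>s. g s \<omega>) T))"
  proof (rule Bochner_Integration.integrable_bound[OF sq_f_int SM])
    show "AE \<omega> in M. norm (sqrt (Ssum (\<lambda>s. g s \<omega>) T)) \<le> norm (sqrt (f \<omega>))"
      using Sle f_nn by (intro AE_I2) (simp add: Ssum_nonneg f_def)
  qed
  have sqS_le: "(\<integral>\<omega>. sqrt (Ssum (\<lambda>s. g s \<omega>) T) \<partial>M) \<le> sqrt (8 * real T) * (G + \<sigma>)"
  proof -
    have "(\<integral>\<omega>. sqrt (Ssum (\<lambda>s. g s \<omega>) T) \<partial>M) \<le> (\<integral>\<omega>. sqrt (f \<omega>) \<partial>M)"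
      using Sle by (intro integral_mono sqS_int sq_f_int) (simp add: f_def)
    also have "\<dots> \<le> sqrt (real T * (8 * \<sigma>\<^sup>2 + 8 * G\<^sup>2))" by (rule sq_f)
    also have "\<dots> \<le> sqrt ((8 * real T) * (G + \<sigma>)\<^sup>2)"
    proof (rule real_sqrt_le_mono)
      have "8 * \<sigma>\<^sup>2 + 8 * G\<^sup>2 \<le> 8 * (G + \<sigma>)\<^sup>2" using G0 \<sigma>_nonneg by (simp add: power2_eq_square algebra_simps)
      hence "real T * (8 * \<sigma>\<^sup>2 + 8 * G\<^sup>2) \<le> real T * (8 * (G + \<sigma>)\<^sup>2)"
        by (rule mult_left_mono) simp
      thus "real T * (8 * \<sigma>\<^sup>2 + 8 * G\<^sup>2) \<le> (8 * real T) * (G + \<sigma>)\<^sup>2"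
        by (simp add: ac_simps)
    qed
    also have "\<dots> = sqrt (8 * real T) * (G + \<sigma>)" using G0 \<sigma>_nonneg by (simp add: real_sqrt_mult)
    finally show ?thesis .
  qed
  have nE_int: "integrable M (\<lambda>\<omega>. norm (E T \<omega>))" and nE_le: "(\<integral>\<omega>. norm (E T \<omega>) \<partial>M) \<le> sqrt (real T) * \<sigma>"
  proof -
    have A: "integrable M (\<lambda>\<omega>. sqrt ((norm (E T \<omega>))\<^sup>2)) \<and> (\<integral>\<omega>. sqrt ((norm (E T \<omega>))\<^sup>2) \<partial>M) \<le> sqrt (real T * \<sigma>\<^sup>2)"
      using sqrt_jensen[OF prob _ _ conjunct2[OF mart[of T]]] mart[of T] by simp
    show "integrable M (\<lambda>\<omega>. norm (E T \<omega>))" using A by simp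
    show "(\<integral>\<omega>. norm (E T \<omega>) \<partial>M) \<le> sqrt (real T) * \<sigma>" using A \<sigma>_nonneg by (simp add: real_sqrt_mult)
  qed
  define c1 where "c1 = R\<^sup>2/(2*\<eta>) + \<eta>"
  define Bf where "Bf = (\<lambda>\<omega>. \<gamma>0/2 * R\<^sup>2 + c1 * sqrt (Ssum (\<lambda>s. g s \<omega>) T)
      - (\<Sum>t\<in>{1..T}. inner (g t \<omega> - F (x t \<omega>)) (x t \<omega> - x0)) + R * norm (\<Sum>t\<in>{1..T}. g t \<omega> - F (x t \<omega>)))"
  have Bf_eq: "Bf = (\<lambda>\<omega>. \<gamma>0/2 * R\<^sup>2 + c1 * sqrt (Ssum (\<lambda>s. g s \<omega>) T)
      - (\<Sum>t\<in>{1..T}. inner (x t \<omega> - x0) (e t \<omega>)) + R * norm (E T \<omega>))"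
    unfolding Bf_def E_def e_def by (simp add: inner_commute)
  have det: "Err X F ((1 / real T) *\<^sub>R (\<Sum>t\<in>{1..T}. x t \<omega>)) \<le> 1 / real T * Bf \<omega>
       \<and> 0 \<le> Err X F ((1 / real T) *\<^sub>R (\<Sum>t\<in>{1..T}. x t \<omega>))" if w: "\<omega> \<in> space M" for \<omega>
  proof -
    have xs: "\<forall>t\<ge>1. is_arg_min (\<lambda>u. inner (g (t - 1) \<omega>) u
                       + 1/2 * adapeg_gamma \<eta> \<gamma>0 (\<lambda>s. g s \<omega>) (t - 1) * (norm (u - z (t - 1) \<omega>))\<^sup>2)
                   (\<lambda>u. u \<in> X) (x t \<omega>)" using x_step w by blast
    have zs: "\<forall>t\<ge>1. is_arg_min (\<lambda>u. inner (g t \<omega>) u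
                       + 1/2 * adapeg_gamma \<eta> \<gamma>0 (\<lambda>s. g s \<omega>) (t - 1) * (norm (u - z (t - 1) \<omega>))\<^sup>2
                       + 1/2 * (adapeg_gamma \<eta> \<gamma>0 (\<lambda>s. g s \<omega>) t
                                - adapeg_gamma \<eta> \<gamma>0 (\<lambda>s. g s \<omega>) (t - 1)) * (norm (u - x t \<omega>))\<^sup>2)
                   (\<lambda>u. u \<in> X) (z t \<omega>)" using z_step w by blast
    show ?thesis
      using det_err[where gg="\<lambda>s. g s \<omega>" and xx="\<lambda>t. x t \<omega>" and zz="\<lambda>t. z t \<omega>" and F=F,
          OF X_convex X_ne xX[OF w] zX[OF w] R_diam F_mono \<eta>_pos \<gamma>0_nonneg T_pos x0_in xs zs]
      unfolding Bf_def c1_def by simp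
  qed
  have Bf_int: "integrable M Bf"
    unfolding Bf_eq using sqS_int nE_int orth1
    by (intro Bochner_Integration.integrable_add Bochner_Integration.integrable_diff
        Bochner_Integration.integrable_sum integrable_mult_right) auto
  have Bf_integral: "integral\<^sup>L M Bf = \<gamma>0/2 * R\<^sup>2 + c1 * (\<integral>\<omega>. sqrt (Ssum (\<lambda>s. g s \<omega>) T) \<partial>M)
      + R * (\<integral>\<omega>. norm (E T \<omega>) \<partial>M)"
  proof -
    have i1: "integrable M (\<lambda>\<omega>. \<Sum>t\<in>{1..T}. inner (x t \<omega> - x0) (e t \<omega>))"
      using orth1 by (intro Bochner_Integration.integrable_sum) auto
    have z1: "(\<integral>\<omega>. (\<Sum>t\<in>{1..T}. inner (x t \<omega> - x0) (e t \<omega>)) \<partial>M) = 0"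
      using orth1 by (subst Bochner_Integration.integral_sum) auto
    show ?thesis unfolding Bf_eq using sqS_int nE_int i1 z1 by (simp add: prob_space)
  qed
  have c1_nn: "c1 \<ge> 0" using \<eta>_pos by (simp add: c1_def)
  have key: "integral\<^sup>L M Bf \<le> 1/2 * \<gamma>0 * R\<^sup>2 + (sqrt 2 * R\<^sup>2 / \<eta> + 4 * sqrt 2 * \<eta> + R) * (G + \<sigma>) * sqrt (real T + 1)"
  proof -
    define s where "s = sqrt (real T)"
    define s' where "s' = sqrt (real T + 1)"
    have ss: "s \<le> s'" unfolding s_def s'_def by simp
    have s0: "0 \<le> s" unfolding s_def by simp
    have s8: "sqrt (8 * real T) = 2 * sqrt 2 * s"
    proof -
      have e8: "sqrt (8::real) = sqrt ((2::real)\<^sup>2) * sqrt 2"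
        by (subst real_sqrt_mult[symmetric]) simp
      have "sqrt (8 * real T) = sqrt 8 * s" unfolding s_def by (simp add: real_sqrt_mult)
      thus ?thesis using e8 by simp
    qed
    have K0: "0 \<le> G + \<sigma>" using G0 \<sigma>_nonneg by simp
    have "integral\<^sup>L M Bf \<le> \<gamma>0/2 * R\<^sup>2 + c1 * (2 * sqrt 2 * s * (G + \<sigma>)) + R * (s * \<sigma>)"
      unfolding Bf_integral using sqS_le nE_le c1_nn R0 s8 s_def
      by (intro add_mono mult_left_mono order.refl) auto
    also have "c1 * (2 * sqrt 2 * s * (G + \<sigma>)) = (sqrt 2 * R\<^sup>2 / \<eta> + 2 * sqrt 2 * \<eta>) * (G + \<sigma>) * s"
      using \<eta>_pos by (simp add: c1_def field_simps)
    also have "\<dots> \<le> (sqrt 2 * R\<^sup>2 / \<eta> + 4 * sqrt 2 * \<eta>) * (G + \<sigma>) * s'"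
      using \<eta>_pos K0 s0 ss by (intro mult_mono add_mono) auto
    also have "R * (s * \<sigma>) \<le> R * (G + \<sigma>) * s'"
    proof -
      have "s * \<sigma> \<le> s' * (G + \<sigma>)" using ss s0 \<sigma>_nonneg G0 by (intro mult_mono) auto
      thus ?thesis using R0 by (simp add: mult_left_mono ac_simps)
    qed
    finally show ?thesis by (simp add: algebra_simps s'_def)
  qed
  have "(\<integral>\<^sup>+\<omega>. ennreal (Err X F ((1 / real T) *\<^sub>R (\<Sum>t\<in>{1..T}. x t \<omega>))) \<partial>M)
      \<le> (\<integral>\<^sup>+\<omega>. ennreal (1 / real T * Bf \<omega>) \<partial>M)"
    using det by (intro nn_integral_mono ennreal_leI) auto
  also have "\<dots> = ennreal (\<integral>\<omega>. 1 / real T * Bf \<omega> \<partial>M)"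
  proof (rule nn_integral_eq_integral)
    show "integrable M (\<lambda>\<omega>. 1 / real T * Bf \<omega>)" using Bf_int by simp
    show "AE \<omega> in M. 0 \<le> 1 / real T * Bf \<omega>" using det by (intro AE_I2) (meson order.trans)
  qed
  also have "\<dots> \<le> ennreal ((1 / real T) *
              (1/2 * \<gamma>0 * R\<^sup>2
               + (sqrt 2 * R\<^sup>2 / \<eta> + 4 * sqrt 2 * \<eta> + R)
                 * ((SUP u\<in>X. norm (F u)) + \<sigma>) * sqrt (real T + 1)))"
    using key unfolding G_def by (intro ennreal_leI) (simp add: divide_right_mono)
  finally show ?thesis .
qed

end
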